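(* Let $I=(G,T,k)$, $G=(V,E)$, be a Node Multiway Cut instance satisfying (R1) no two terminals are adjacent and $p(I)\ge 0$; (R2) no vertex of $V\setminus T$ is adjacent to two distinct terminals; (R3) for every terminal $t$ and every neighbour $w\in V\setminus T$ of $t$, the optimum of the LP-relaxation of $I$ with the additional constraint $d_w=0$ is strictly larger than $LP(I)$. Let $t\in T$ and let $w\in V\setminus T$ be a neighbour of $t$. Let $I_1=(G-w,T,k-1)$ and $I_2=(G/tw,T,k)$. Then $LP(I_1)\ge LP(I)-1/2$ and $LP(I_2)\ge LP(I)+1/2$; consequently $p(I_1)\le p(I)-1/2$ and $p(I_2)\le p(I)-1/2$. Moreover, $I$ is a YES-instance iff $I_1$ or $I_2$ is a YES-instance.
   Context: A Node Multiway Cut instance $I=(G,T,k)$ consists of a simple undirected graph $G=(V,E)$, a set $T\subseteq V$ of terminals and an integer $k$; it is a YES-instance iff there is a set $X\subseteq V\setminus T$ with $|X|\le k$ such that every path in $G$ between two distinct terminals contains a vertex of $X$. Let $\mathcal P(I)$ be the set of all simple paths in $G$ connecting two distinct terminals. The LP-relaxation of $I$ is: minimize $\sum_{v\in V\setminus T} d_v$ subject to $\sum_{v\in V(P)\setminus T} d_v\ge 1$ for every $P\in\mathcal P(I)$ and $d_v\ge 0$ for all $v\in V\setminus T$. $LP(I)$ denotes its optimum value and $p(I)=k-LP(I)$. $G-w$ is $G$ with vertex $w$ and its incident edges removed. For a terminal $t$ and a non-terminal neighbour $w$, $G/tw$ is obtained by deleting $t$ and $w$ and adding a new vertex adjacent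 to all vertices formerly adjacent to $t$ or $w$; this new vertex is identified with $t$, so the terminal set remains $T$. *)

theory Defs
  imports Main "HOL-Library.Extended_Real"
begin

type_synonym 'a graph = "'a set \<times> 'a set set"

definition simple_graph :: "'a graph \<Rightarrow> bool" where
  "simple_graph G \<longleftrightarrow> finite (fst G) \<and> (\<forall>e\<in>snd G. card e = 2 \<and> e \<subseteq> fst G)"

definition adj :: "'a graph \<Rightarrow> 'a \<Rightarrow> 'a \<Rightarrow> bool" where
  "adj G u v \<longleftrightarrow> {u, v} \<in> snd G"

definition simple_path :: "'a graph \<Rightarrow> 'a list \<Rightarrow> bool" where
  "simple_path G P \<longleftrightarrow> P \<noteq> [] \<and> distinct P \<and> set P \<subseteq> fst G \<and>
     (\<forall>i. Suc i < length P \<longrightarrow> adj G (P ! i) (P ! Suc i))"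

definition term_paths :: "'a graph \<Rightarrow> 'a set \<Rightarrow> 'a list set" where
  "term_paths G T = {P. simple_path G P \<and> hd P \<in> T \<and> last P \<in> T \<and> hd P \<noteq> last P}"

definition is_mwc_instance :: "'a graph \<Rightarrow> 'a set \<Rightarrow> bool" where
  "is_mwc_instance G T \<longleftrightarrow> simple_graph G \<and> T \<subseteq> fst G"

definition yes_instance :: "'a graph \<Rightarrow> 'a set \<Rightarrow> int \<Rightarrow> bool" where
  "yes_instance G T k \<longleftrightarrow> (\<exists>X. X \<subseteq> fst G - T \<and> int (card X) \<le> k \<and>
      (\<forall>P\<in>term_paths G T. set P \<inter> X \<noteq> {}))"

text \<open>Feasible solutions of the LP relaxation (only values on V \ T matter).\<close>
definition lp_feasible :: "'a graph \<Rightarrow> 'a set \<Rightarrow> ('a \<Rightarrow> real) \<Rightarrow> bool" where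
  "lp_feasible G T d \<longleftrightarrow> (\<forall>v\<in>fst G - T. d v \<ge> 0) \<and>
      (\<forall>P\<in>term_paths G T. (\<Sum>v\<in>set P - T. d v) \<ge> 1)"

text \<open>Optimum value of the LP relaxation, in the extended reals (+\<infinity> if infeasible).\<close>
definition LP :: "'a graph \<Rightarrow> 'a set \<Rightarrow> ereal" where
  "LP G T = (INF d \<in> {d. lp_feasible G T d}. ereal (\<Sum>v\<in>fst G - T. d v))"

definition LP_zero :: "'a graph \<Rightarrow> 'a set \<Rightarrow> 'a \<Rightarrow> ereal" where
  "LP_zero G T w = (INF d \<in> {d. lp_feasible G T d \<and> d w = 0}. ereal (\<Sum>v\<in>fst G - T. d v))"

definition gap :: "'a graph \<Rightarrow> 'a set \<Rightarrow> int \<Rightarrow> ereal" where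
  "gap G T k = ereal (of_int k) - LP G T"

definition del_vertex :: "'a graph \<Rightarrow> 'a \<Rightarrow> 'a graph" where
  "del_vertex G w = (fst G - {w}, {e \<in> snd G. w \<notin> e})"

text \<open>G/tw: delete t and w, add a new vertex (identified with t) adjacent to all
  vertices formerly adjacent to t or w.\<close>
definition contract :: "'a graph \<Rightarrow> 'a \<Rightarrow> 'a \<Rightarrow> 'a graph" where
  "contract G t w = (fst G - {w},
     {e \<in> snd G. t \<notin> e \<and> w \<notin> e} \<union>
     {{t, x} | x. x \<in> fst G \<and> x \<noteq> t \<and> x \<noteq> w \<and> (adj G t x \<or> adj G w x)})"

end

theory Submission
  imports Defs "HOL-Analysis.Analysis"
begin


lemma ex_minf:
  fixes f :: "'a \<Rightarrow> real"
  assumes "finite S" "S \<noteq> {}"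
  shows "\<exists>x\<in>S. \<forall>y\<in>S. f x \<le> f y"
proof -
  have "Min (f ` S) \<in> f ` S" using assms by simp
  then obtain x where "x \<in> S" "f x = Min (f ` S)" by auto
  then show ?thesis using assms by (metis Min_le finite_imageI image_eqI)
qed

lemma A1_eq: "{\<theta>::real. \<exists>t\<in>T. a t \<le> \<theta> \<and> \<theta> < a t + dd} = (\<Union>t\<in>T. {a t..<a t + dd})"
  by (simp add: set_eq_iff)

lemma A2_eq: "{\<theta>::real. \<exists>s\<in>T. \<exists>t\<in>T. s\<noteq>t \<and> a s \<le> \<theta> \<and> \<theta> < a s + dd \<and> a t \<le> \<theta> \<and> \<theta> < a t + dd}
   = (\<Union>s\<in>T. \<Union>t\<in>T-{s}. {a s..<a s + dd} \<inter> {a t..<a t + dd})"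
  by (simp add: set_eq_iff) blast

lemma A1_sets: "finite T \<Longrightarrow> {\<theta>::real. \<exists>t\<in>T. a t \<le> \<theta> \<and> \<theta> < a t + dd} \<in> sets lborel"
  unfolding A1_eq by (intro sets.finite_UN) auto

lemma A2_sets: "finite T \<Longrightarrow> {\<theta>::real. \<exists>s\<in>T. \<exists>t\<in>T. s\<noteq>t \<and> a s \<le> \<theta> \<and> \<theta> < a s + dd \<and> a t \<le> \<theta> \<and> \<theta> < a t + dd} \<in> sets lborel"
  unfolding A2_eq by (intro sets.finite_UN sets.Int) auto

lemma meas_le_Icc:
  fixes A :: "real set"
  assumes "A \<in> sets lborel" "A \<subseteq> {l..u}" "l \<le> u"
  shows "measure lborel A \<le> u - l"
proof -
  have "measure lborel A \<le> measure lborel {l..u}"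
  proof (rule measure_mono_fmeasurable)
    show "{l..u} \<in> fmeasurable lborel" by (metis cbox_interval fmeasurable_cbox)
  qed (use assms in auto)
  then show ?thesis using assms by (simp only: measure_lborel_Icc)
qed

lemma meas_empty_or_Icc:
  fixes A :: "real set"
  assumes "A \<in> sets lborel" "A \<subseteq> {l..u}"
  shows "measure lborel A \<le> max 0 (u - l)"
proof (cases "l \<le> u")
  case True then show ?thesis using meas_le_Icc[OF assms] by simp
next
  case False then have "A = {}" using assms by auto
  then show ?thesis by simp
qed

lemma measure_bound:
  fixes a :: "'a \<Rightarrow> real" and dd :: real
  assumes fin: "finite T" and dd: "dd \<ge> 0" and pair: "\<forall>s\<in>T. \<forall>t\<in>T. s \<noteq> t \<longrightarrow> a s + a t + dd \<ge> 1"
  shows "measure lborel ({\<theta>. \<exists>t\<in>T. a t \<le> \<theta> \<and> \<theta> < a t + dd} \<inter> {0..<1/2})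
       + measure lborel ({\<theta>. \<exists>s\<in>T. \<exists>t\<in>T. s\<noteq>t \<and> a s \<le> \<theta> \<and> \<theta> < a s + dd \<and> a t \<le> \<theta> \<and> \<theta> < a t + dd} \<inter> {0..<1/2}) \<le> dd"
    (is "measure lborel (?A1 \<inter> ?J) + measure lborel (?A2 \<inter> ?J) \<le> dd")
proof -
  have ms1: "?A1 \<inter> ?J \<in> sets lborel" using A1_sets[OF fin] by auto
  have ms2: "?A2 \<inter> ?J \<in> sets lborel" using A2_sets[OF fin] by auto
  show ?thesis
  proof (cases "\<exists>s\<in>T. \<exists>t\<in>T. s \<noteq> t \<and> a s < 1/2 \<and> a t < 1/2")
    case False
    have e2: "?A2 \<inter> ?J = {}"
    proof (rule equals0I)
      fix x assume "x \<in> ?A2 \<inter> ?J"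
      then obtain p q where "p\<in>T" "q\<in>T" "p\<noteq>q" "a p \<le> x" "a q \<le> x" "x < 1/2" by auto
      then show False using False by (meson order_le_less_trans)
    qed
    show ?thesis
    proof (cases "\<exists>t\<in>T. a t < 1/2")
      case True
      then obtain t0 where t0: "t0 \<in> T" "a t0 < 1/2" by blast
      have sub0: "?A1 \<inter> ?J \<subseteq> {a t0..a t0 + dd}"
      proof
        fix x assume "x \<in> ?A1 \<inter> ?J"
        then obtain t where "t \<in> T" "a t \<le> x" "x < a t + dd" "x < 1/2" by auto
        moreover have "t = t0"
        proof (rule ccontr)
          assume "t \<noteq> t0"
          moreover have "a t < 1/2" using \<open>a t \<le> x\<close> \<open>x < 1/2\<close> by linarith
          ultimately show False using False t0 \<open>t \<in> T\<close> by blast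
        qed
        ultimately show "x \<in> {a t0..a t0 + dd}" by auto
      qed
      have "measure lborel (?A1 \<inter> ?J) \<le> dd" using meas_le_Icc[OF ms1 sub0] dd by linarith
      then show ?thesis unfolding e2 measure_empty by linarith
    next
      case False
      have h0: "?A1 \<inter> ?J = {}"
      proof (rule equals0I)
        fix x assume "x \<in> ?A1 \<inter> ?J"
        then obtain p where "p\<in>T" "a p \<le> x" "x < 1/2" by auto
        then show False using False by (meson order_le_less_trans)
      qed
      show ?thesis using dd by (simp only: h0 e2 measure_empty add_0)
    qed
  next
    case True
    then obtain s t where st: "s\<in>T" "t\<in>T" "s \<noteq> t" "a s < 1/2" "a t < 1/2" by blast
    have Tne: "T \<noteq> {}" using st by auto
    obtain s0 where s0: "s0 \<in> T" "\<forall>u\<in>T. a s0 \<le> a u"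
      using ex_minf[OF fin Tne, of a] by (elim bexE) 
    have ne: "T - {s0} \<noteq> {}" using st by auto
    have fin2: "finite (T - {s0})" using fin by simp
    obtain s1 where s1: "s1 \<in> T - {s0}" "\<forall>u\<in>T-{s0}. a s1 \<le> a u"
      using ex_minf[OF fin2 ne, of a] by (elim bexE)
    have m1: "a s0 < 1/2" using s0 st(1,4) by (meson order_le_less_trans)
    have m2: "a s1 < 1/2"
    proof (cases "s = s0")
      case True then have "t \<in> T - {s0}" using st by auto
      then show ?thesis using s1 st(5) by (meson order_le_less_trans)
    next
      case False then have "s \<in> T - {s0}" using st by auto
      then show ?thesis using s1 st(4) by (meson order_le_less_trans)
    qed
    have sub1: "?A1 \<inter> ?J \<subseteq> {a s0..1/2}"
    proof
      fix x assume "x \<in> ?A1 \<inter> ?J"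
      then obtain p where "p\<in>T" "a p \<le> x" "x < 1/2" by auto
      then show "x \<in> {a s0..1/2}" using s0 by (meson atLeastAtMost_iff less_eq_real_def order_trans)
    qed
    have sub2: "?A2 \<inter> ?J \<subseteq> {a s1..1/2}"
    proof
      fix x assume "x \<in> ?A2 \<inter> ?J"
      then obtain p q where pq: "p \<in> T" "q \<in> T" "p \<noteq> q" "a p \<le> x" "a q \<le> x" "x < 1/2" by auto
      have "a s1 \<le> x"
      proof (cases "p = s0")
        case True then have "q \<in> T - {s0}" using pq by auto
        then show ?thesis using pq s1 by (meson order_trans)
      next
        case False then have "p \<in> T - {s0}" using pq by auto
        then show ?thesis using pq s1 by (meson order_trans)
      qed
      then show "x \<in> {a s1..1/2}" using pq by auto
    qed
    have "measure lborel (?A1 \<inter> ?J) \<le> 1/2 - a s0" using meas_le_Icc[OF ms1 sub1] m1 by linarith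
    moreover have "measure lborel (?A2 \<inter> ?J) \<le> 1/2 - a s1" using meas_le_Icc[OF ms2 sub2] m2 by linarith
    moreover have "a s0 + a s1 + dd \<ge> 1" using pair s0 s1 by auto
    ultimately show ?thesis by linarith
  qed
qed


fun walk :: "'a graph \<Rightarrow> 'a list \<Rightarrow> bool" where
  "walk G [] = False"
| "walk G [v] = (v \<in> fst G)"
| "walk G (u # v # W) = (u \<in> fst G \<and> (u = v \<or> adj G u v) \<and> walk G (v # W))"

lemma adj_sym: "adj G u v = adj G v u"
  unfolding adj_def by (simp add: insert_commute)

lemma walk_nonempty: "walk G W \<Longrightarrow> W \<noteq> []"
  by (cases W) auto

lemma walk_set: "walk G W \<Longrightarrow> set W \<subseteq> fst G"
  by (induction G W rule: walk.induct) auto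

lemma walk_Cons: "walk G (u # W) \<longleftrightarrow> u \<in> fst G \<and> (W = [] \<or> ((u = hd W \<or> adj G u (hd W)) \<and> walk G W))"
  by (cases W) auto

lemma walk_append:
  "walk G A \<Longrightarrow> walk G B \<Longrightarrow> (last A = hd B \<or> adj G (last A) (hd B)) \<Longrightarrow> walk G (A @ B)"
proof (induction A)
  case Nil then show ?case by simp
next
  case (Cons a A)
  show ?case
  proof (cases "A = []")
    case True
    then show ?thesis using Cons.prems walk_nonempty[OF Cons.prems(2)] by (simp add: walk_Cons)
  next
    case False
    have wA: "walk G A" using Cons.prems(1) False by (simp add: walk_Cons)
    have "walk G (A @ B)" using Cons.IH[OF wA Cons.prems(2)] Cons.prems(3) False by simp
    moreover have "hd (A @ B) = hd A" using False by simp
    ultimately show ?thesis using Cons.prems(1) False by (simp add: walk_Cons)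
  qed
qed

lemma walk_rev: "walk G W \<Longrightarrow> walk G (rev W)"
proof (induction W)
  case Nil then show ?case by simp
next
  case (Cons a W)
  show ?case
  proof (cases "W = []")
    case True then show ?thesis using Cons.prems by simp
  next
    case False
    have wW: "walk G W" and a: "a \<in> fst G" and h: "a = hd W \<or> adj G a (hd W)"
      using Cons.prems False by (auto simp: walk_Cons)
    have "walk G (rev W @ [a])"
      by (rule walk_append) (use Cons.IH[OF wW] a h False in \<open>auto simp: last_rev adj_sym\<close>)
    then show ?thesis by simp
  qed
qed

lemma walk_drop: "walk G W \<Longrightarrow> i < length W \<Longrightarrow> walk G (drop i W)"
proof (induction W arbitrary: i)
  case Nil then show ?case by simp
next
  case (Cons a W)
  show ?case
  proof (cases i)
    case 0 then show ?thesis using Cons.prems by simp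
  next
    case (Suc j)
    then have "W \<noteq> []" using Cons.prems by auto
    then have "walk G W" using Cons.prems by (simp add: walk_Cons)
    then show ?thesis using Cons.IH[of j] Suc Cons.prems by simp
  qed
qed

lemma walk_take: "walk G W \<Longrightarrow> 0 < i \<Longrightarrow> walk G (take i W)"
proof (induction W arbitrary: i)
  case Nil then show ?case by simp
next
  case (Cons a W)
  obtain j where j: "i = Suc j" using Cons.prems by (cases i) auto
  show ?case
  proof (cases "W = [] \<or> j = 0")
    case True then show ?thesis using Cons.prems j by (auto simp: walk_Cons)
  next
    case False
    then have wW: "walk G W" and h: "a \<in> fst G" "a = hd W \<or> adj G a (hd W)" using Cons.prems by (auto simp: walk_Cons)
    have "walk G (take j W)" using Cons.IH[OF wW] False by simp
    moreover have "hd (take j W) = hd W" using False by (simp add: hd_take)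
    moreover have "take j W \<noteq> []" using False by simp
    ultimately show ?thesis using j h by (simp add: walk_Cons)
  qed
qed

lemma walk_nth_iff:
  "walk G W \<longleftrightarrow> W \<noteq> [] \<and> set W \<subseteq> fst G \<and>
     (\<forall>i. Suc i < length W \<longrightarrow> W ! i = W ! Suc i \<or> adj G (W ! i) (W ! Suc i))"
proof (induction W)
  case Nil then show ?case by simp
next
  case (Cons a W)
  show ?case
  proof (cases W)
    case Nil then show ?thesis by simp
  next
    case (Cons b W')
    have "(\<forall>i. Suc i < length (a # W) \<longrightarrow> (a # W) ! i = (a # W) ! Suc i \<or> adj G ((a # W) ! i) ((a # W) ! Suc i))
      \<longleftrightarrow> (a = b \<or> adj G a b) \<and> (\<forall>i. Suc i < length W \<longrightarrow> W ! i = W ! Suc i \<or> adj G (W ! i) (W ! Suc i))"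
      (is "?L \<longleftrightarrow> ?R")
    proof
      assume L: ?L
      have "a = b \<or> adj G a b" using L[rule_format, of 0] Cons by simp
      moreover have "\<forall>i. Suc i < length W \<longrightarrow> W ! i = W ! Suc i \<or> adj G (W ! i) (W ! Suc i)"
        using L[rule_format, of "Suc _"] by simp
      ultimately show ?R by blast
    next
      assume R: ?R
      show ?L
      proof (intro allI impI)
        fix i assume i: "Suc i < length (a # W)"
        show "(a # W) ! i = (a # W) ! Suc i \<or> adj G ((a # W) ! i) ((a # W) ! Suc i)"
        proof (cases i)
          case 0 then show ?thesis using R Cons by simp
        next
          case (Suc j) then show ?thesis using R i by simp
        qed
      qed
    qed
    then show ?thesis using Cons.IH Cons by auto
  qed
qed

lemma simple_path_iff: "Defs.simple_path G P \<longleftrightarrow> walk G P \<and> distinct P"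
  unfolding Defs.simple_path_def walk_nth_iff
  by (auto simp: nth_eq_iff_index_eq)

lemma walk_to_path:
  assumes "walk G W"
  shows "\<exists>P. Defs.simple_path G P \<and> hd P = hd W \<and> last P = last W \<and> set P \<subseteq> set W"
  using assms
proof (induction W)
  case Nil then show ?case by simp
next
  case (Cons a W)
  show ?case
  proof (cases "W = []")
    case True
    then show ?thesis using Cons.prems by (intro exI[of _ "[a]"]) (simp add: simple_path_iff)
  next
    case False
    then have wW: "walk G W" and h: "a \<in> fst G" "a = hd W \<or> adj G a (hd W)"
      using Cons.prems by (auto simp: walk_Cons)
    obtain P where P: "Defs.simple_path G P" "hd P = hd W" "last P = last W" "set P \<subseteq> set W"
      using Cons.IH[OF wW] by blast
    have Pne: "P \<noteq> []" using P(1) by (simp add: Defs.simple_path_def)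
    show ?thesis
    proof (cases "a \<in> set P")
      case True
      then obtain i where i: "i < length P" "P ! i = a" by (meson in_set_conv_nth)
      have "Defs.simple_path G (drop i P)"
        using P(1) i by (simp add: simple_path_iff walk_drop)
      moreover have "hd (drop i P) = a" using i by (simp add: hd_drop_conv_nth)
      moreover have "last (drop i P) = last P" using i by simp
      moreover have "set (drop i P) \<subseteq> set P" by (rule set_drop_subset)
      ultimately show ?thesis using P False by (intro exI[of _ "drop i P"]) auto
    next
      case aP: False
      have "a \<noteq> hd W" using aP P(2) Pne by (metis hd_in_set)
      then have "adj G a (hd P)" using h P(2) by simp
      then have "walk G (a # P)" using P(1) h(1) Pne by (simp add: walk_Cons simple_path_iff)
      then have "Defs.simple_path G (a # P)" using P(1) aP by (simp add: simple_path_iff)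
      then show ?thesis using P False Pne by (intro exI[of _ "a # P"]) auto
    qed
  qed
qed


lemma term_paths_walk: "P \<in> term_paths G T \<longleftrightarrow> walk G P \<and> distinct P \<and> hd P \<in> T \<and> last P \<in> T \<and> hd P \<noteq> last P"
  unfolding term_paths_def simple_path_iff by auto

lemma walk_term_path:
  assumes "walk G W" "hd W \<in> T" "last W \<in> T" "hd W \<noteq> last W"
  shows "\<exists>P\<in>term_paths G T. set P \<subseteq> set W"
proof -
  obtain P where "Defs.simple_path G P" "hd P = hd W" "last P = last W" "set P \<subseteq> set W"
    using walk_to_path[OF assms(1)] by blast
  then show ?thesis using assms unfolding term_paths_def by auto
qed

lemma adj_del: "adj (del_vertex G w) u v \<longleftrightarrow> adj G u v \<and> u \<noteq> w \<and> v \<noteq> w"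
  unfolding adj_def del_vertex_def by auto

lemma fst_del: "fst (del_vertex G w) = fst G - {w}"
  by (simp add: del_vertex_def)

lemma walk_del: "walk (del_vertex G w) W \<longleftrightarrow> walk G W \<and> w \<notin> set W"
proof (induction W)
  case Nil then show ?case by simp
next
  case (Cons a W)
  show ?case
  proof (cases "W = []")
    case True then show ?thesis by (auto simp: del_vertex_def)
  next
    case False
    have "hd W \<in> set W" using False by simp
    then show ?thesis using Cons.IH False
      by (auto simp: walk_Cons adj_del fst_del)
  qed
qed

lemma term_paths_del: "P \<in> term_paths (del_vertex G w) T \<longleftrightarrow> P \<in> term_paths G T \<and> w \<notin> set P"
  unfolding term_paths_walk walk_del by auto

lemma fst_contract: "fst (contract G t w) = fst G - {w}"
  by (simp add: contract_def)

lemma adj_contract: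
  "adj (contract G t w) u v \<longleftrightarrow> (adj G u v \<and> t \<noteq> u \<and> t \<noteq> v \<and> w \<noteq> u \<and> w \<noteq> v) \<or>
     (\<exists>x. {u, v} = {t, x} \<and> x \<in> fst G \<and> x \<noteq> t \<and> x \<noteq> w \<and> (adj G t x \<or> adj G w x))"
  unfolding adj_def contract_def by auto

lemma contract_step:
  assumes "u \<in> fst G" "v \<in> fst G" "adj G u v" "t \<in> fst G" "t \<noteq> w"
  defines "f \<equiv> (\<lambda>x. if x = w then t else x)"
  shows "f u = f v \<or> adj (contract G t w) (f u) (f v)"
proof -
  consider "u = w \<or> u = t" "v = w \<or> v = t" | "u = w" "v \<noteq> w" "v \<noteq> t" | "u = t" "v \<noteq> w" "v \<noteq> t"
    | "u \<noteq> w" "u \<noteq> t" "v = w" | "u \<noteq> w" "u \<noteq> t" "v = t" | "u \<noteq> w" "u \<noteq> t" "v \<noteq> w" "v \<noteq> t"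
    by blast
  then show ?thesis
  proof cases
    case 1 then show ?thesis unfolding f_def using assms(5) by auto
  next
    case 2 then show ?thesis unfolding f_def adj_contract using assms by auto
  next
    case 3 then show ?thesis unfolding f_def adj_contract using assms by auto
  next
    case 4 then show ?thesis unfolding f_def adj_contract using assms
      by (auto simp: adj_sym[of G w u] insert_commute intro!: exI[of _ u])
  next
    case 5 then show ?thesis unfolding f_def adj_contract using assms
      by (auto simp: adj_sym[of G u t] insert_commute intro!: exI[of _ u])
  next
    case 6 then show ?thesis unfolding f_def adj_contract using assms by auto
  qed
qed

lemma walk_to_contract:
  assumes "walk G P" "t \<in> fst G" "t \<noteq> w"
  shows "walk (contract G t w) (map (\<lambda>x. if x = w then t else x) P)"
  using assms(1)
proof (induction P)
  case Nil then show ?case by simp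
next
  case (Cons a P)
  let ?f = "\<lambda>x. if x = w then t else x"
  have fa: "?f a \<in> fst (contract G t w)" using Cons.prems assms(2,3) by (auto simp: fst_contract walk_Cons)
  show ?case
  proof (cases "P = []")
    case True then show ?thesis using fa by simp
  next
    case False
    then have wP: "walk G P" and h: "a \<in> fst G" "a = hd P \<or> adj G a (hd P)"
      using Cons.prems by (auto simp: walk_Cons)
    have hP: "hd P \<in> fst G" using walk_set[OF wP] False by auto
    have "?f a = ?f (hd P) \<or> adj (contract G t w) (?f a) (?f (hd P))"
      using h contract_step[OF h(1) hP _ assms(2,3)] by auto
    moreover have "hd (map ?f P) = ?f (hd P)" using False by (simp add: hd_map)
    ultimately show ?thesis using Cons.IH[OF wP] fa False by (simp add: walk_Cons)
  qed
qed

lemma walk_from_contract: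
  assumes "walk (contract G t w) Q" "adj G t w" "t \<in> fst G" "w \<in> fst G"
  shows "\<exists>W. walk G W \<and> hd W = hd Q \<and> last W = last Q \<and> set W \<subseteq> set Q \<union> {w}"
  using assms(1)
proof (induction Q)
  case Nil then show ?case by simp
next
  case (Cons a Q)
  have a: "a \<in> fst G" using Cons.prems by (auto simp: walk_Cons fst_contract)
  show ?case
  proof (cases "Q = []")
    case True then show ?thesis using a by (intro exI[of _ "[a]"]) auto
  next
    case False
    then have wQ: "walk (contract G t w) Q" and h: "a = hd Q \<or> adj (contract G t w) a (hd Q)"
      using Cons.prems by (auto simp: walk_Cons)
    obtain W where W: "walk G W" "hd W = hd Q" "last W = last Q" "set W \<subseteq> set Q \<union> {w}"
      using Cons.IH[OF wQ] by blast
    have Wne: "W \<noteq> []" using W(1) walk_nonempty by auto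
    have hQ: "hd Q \<in> set Q" using False by simp
    show ?thesis
    proof (cases "a = hd Q \<or> adj G a (hd Q)")
      case True
      then have "walk G (a # W)" using W a Wne by (auto simp: walk_Cons)
      then show ?thesis using W False Wne hQ by (intro exI[of _ "a # W"]) auto
    next
      case nadj: False
      then obtain x where x: "{a, hd Q} = {t, x}" "x \<in> fst G" "x \<noteq> t" "x \<noteq> w" "adj G t x \<or> adj G w x"
        using h unfolding adj_contract by blast
      have axw: "adj G w x" using x(5) x(1) nadj by (auto simp: doubleton_eq_iff adj_sym)
      have "walk G (a # w # W)"
      proof -
        have "adj G w (hd W)" using W(2) x(1) axw nadj assms(2)
          by (auto simp: doubleton_eq_iff adj_sym)
        then have "walk G (w # W)" using W Wne assms(4)
          by (auto simp: walk_Cons)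
        moreover have "adj G a w" using x(1) axw assms(2) nadj by (auto simp: doubleton_eq_iff adj_sym)
        ultimately show ?thesis using a by (simp add: walk_Cons)
      qed
      then show ?thesis using W False Wne hQ by (intro exI[of _ "a # w # W"]) auto
    qed
  qed
qed


lemma tp_to_contract:
  assumes "P \<in> term_paths G T" "t \<in> fst G" "t \<in> T" "w \<notin> T" "t \<noteq> w"
  shows "\<exists>Q\<in>term_paths (contract G t w) T. set Q \<subseteq> (set P - {w}) \<union> {t}"
proof -
  let ?f = "\<lambda>x. if x = w then t else x"
  have P: "walk G P" "hd P \<in> T" "last P \<in> T" "hd P \<noteq> last P" using assms(1) by (auto simp: term_paths_walk)
  have Pne: "P \<noteq> []" using P(1) walk_nonempty by auto
  have W: "walk (contract G t w) (map ?f P)" using walk_to_contract[OF P(1) assms(2,5)] .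
  have "hd (map ?f P) = hd P" using Pne P(2) assms(4) by (auto simp: hd_map)
  moreover have "last (map ?f P) = last P" using Pne P(3) assms(4) by (auto simp: last_map)
  ultimately obtain Q where "Q \<in> term_paths (contract G t w) T" "set Q \<subseteq> set (map ?f P)"
    using walk_term_path[OF W, of T] P by auto
  moreover have "set (map ?f P) \<subseteq> (set P - {w}) \<union> {t}" by auto
  ultimately show ?thesis by blast
qed

lemma tp_from_contract:
  assumes "Q \<in> term_paths (contract G t w) T" "adj G t w" "t \<in> fst G" "w \<in> fst G"
  shows "\<exists>P\<in>term_paths G T. set P \<subseteq> set Q \<union> {w}"
proof -
  have Q: "walk (contract G t w) Q" "hd Q \<in> T" "last Q \<in> T" "hd Q \<noteq> last Q"
    using assms(1) by (auto simp: term_paths_walk)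
  obtain W where W: "walk G W" "hd W = hd Q" "last W = last Q" "set W \<subseteq> set Q \<union> {w}"
    using walk_from_contract[OF Q(1) assms(2-4)] by blast
  obtain P where "P \<in> term_paths G T" "set P \<subseteq> set W"
    using walk_term_path[OF W(1), of T] W Q by auto
  then show ?thesis using W(4) by blast
qed

lemma yes_equiv:
  assumes sg: "simple_graph G" and t: "t \<in> T" "t \<in> fst G" and w: "w \<in> fst G" "w \<notin> T" and tw: "adj G t w"
  shows "yes_instance G T k \<longleftrightarrow> (yes_instance (del_vertex G w) T (k - 1) \<or> yes_instance (contract G t w) T k)"
proof -
  have twne: "t \<noteq> w" using t w by auto
  have finG: "finite (fst G)" using sg by (simp add: simple_graph_def)
  show ?thesis
  proof
    assume "yes_instance G T k"
    then obtain X where X: "X \<subseteq> fst G - T" "int (card X) \<le> k" "\<forall>P\<in>term_paths G T. set P \<inter> X \<noteq> {}"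
      unfolding yes_instance_def by blast
    have finX: "finite X" by (rule finite_subset[OF _ finG]) (use X(1) in auto)
    show "yes_instance (del_vertex G w) T (k - 1) \<or> yes_instance (contract G t w) T k"
    proof (cases "w \<in> X")
      case True
      have "X - {w} \<subseteq> fst (del_vertex G w) - T" using X(1) by (auto simp: fst_del)
      moreover have "int (card (X - {w})) \<le> k - 1"
      proof -
        have c: "card (X - {w}) = card X - 1" using True finX by simp
        have "card X \<ge> 1" using True finX by (metis One_nat_def Suc_leI card_gt_0_iff empty_iff)
        then have "int (card (X - {w})) = int (card X) - 1" unfolding c by (simp add: of_nat_diff)
        then show ?thesis using X(2) by linarith
      qed
      moreover have "\<forall>P\<in>term_paths (del_vertex G w) T. set P \<inter> (X - {w}) \<noteq> {}"
      proof
        fix P assume "P \<in> term_paths (del_vertex G w) T"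
        then have "P \<in> term_paths G T" "w \<notin> set P" by (auto simp: term_paths_del)
        then show "set P \<inter> (X - {w}) \<noteq> {}" using X(3) by blast
      qed
      ultimately show ?thesis unfolding yes_instance_def by blast
    next
      case False
      have "X \<subseteq> fst (contract G t w) - T" using X(1) False by (auto simp: fst_contract)
      moreover have "\<forall>Q\<in>term_paths (contract G t w) T. set Q \<inter> X \<noteq> {}"
      proof
        fix Q assume "Q \<in> term_paths (contract G t w) T"
        then obtain P where "P \<in> term_paths G T" "set P \<subseteq> set Q \<union> {w}"
          using tp_from_contract[OF _ tw t(2) w(1)] by blast
        then show "set Q \<inter> X \<noteq> {}" using X(3) False by blast
      qed
      ultimately show ?thesis using X(2) unfolding yes_instance_def by blast
    qed
  next
    assume "yes_instance (del_vertex G w) T (k - 1) \<or> yes_instance (contract G t w) T k"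
    then show "yes_instance G T k"
    proof
      assume "yes_instance (del_vertex G w) T (k - 1)"
      then obtain X where X: "X \<subseteq> fst (del_vertex G w) - T" "int (card X) \<le> k - 1"
          "\<forall>P\<in>term_paths (del_vertex G w) T. set P \<inter> X \<noteq> {}"
        unfolding yes_instance_def by blast
      have finX: "finite X" by (rule finite_subset[OF _ finG]) (use X(1) in \<open>auto simp: fst_del\<close>)
      have "insert w X \<subseteq> fst G - T" using X(1) w by (auto simp: fst_del)
      moreover have "int (card (insert w X)) \<le> k"
      proof -
        have "card (insert w X) \<le> card X + 1" using finX by (simp add: card_insert_if)
        then have "int (card (insert w X)) \<le> int (card X) + 1" by linarith
        then show ?thesis using X(2) by linarith
      qed
      moreover have "\<forall>P\<in>term_paths G T. set P \<inter> insert w X \<noteq> {}"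
        using X(3) by (auto simp: term_paths_del)
      ultimately show ?thesis unfolding yes_instance_def by blast
    next
      assume "yes_instance (contract G t w) T k"
      then obtain X where X: "X \<subseteq> fst (contract G t w) - T" "int (card X) \<le> k"
          "\<forall>Q\<in>term_paths (contract G t w) T. set Q \<inter> X \<noteq> {}"
        unfolding yes_instance_def by blast
      have "X \<subseteq> fst G - T" using X(1) by (auto simp: fst_contract)
      moreover have "\<forall>P\<in>term_paths G T. set P \<inter> X \<noteq> {}"
      proof
        fix P assume "P \<in> term_paths G T"
        then obtain Q where "Q \<in> term_paths (contract G t w) T" "set Q \<subseteq> (set P - {w}) \<union> {t}"
          using tp_to_contract[OF _ t(2) t(1) w(2) twne] by blast
        moreover have "t \<notin> X" using X(1) t by auto
        ultimately show "set P \<inter> X \<noteq> {}" using X(3) by blast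
      qed
      ultimately show ?thesis using X(2) unfolding yes_instance_def by blast
    qed
  qed
qed


definition pcost :: "'a set \<Rightarrow> ('a \<Rightarrow> real) \<Rightarrow> 'a list \<Rightarrow> real" where
  "pcost T d P = sum d (set P - T)"

definition pths :: "'a graph \<Rightarrow> 'a \<Rightarrow> 'a \<Rightarrow> 'a list set" where
  "pths G s v = {P. Defs.simple_path G P \<and> hd P = s \<and> last P = v}"

definition tdist :: "'a graph \<Rightarrow> 'a set \<Rightarrow> ('a \<Rightarrow> real) \<Rightarrow> 'a \<Rightarrow> 'a \<Rightarrow> real" where
  "tdist G T d s v = (if pths G s v \<noteq> {} then Min (pcost T d ` pths G s v) else d v + 1)"

definition inI :: "'a graph \<Rightarrow> 'a set \<Rightarrow> ('a \<Rightarrow> real) \<Rightarrow> 'a \<Rightarrow> 'a \<Rightarrow> real \<Rightarrow> bool" where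
  "inI G T d s v \<theta> \<longleftrightarrow> tdist G T d s v - d v \<le> \<theta> \<and> \<theta> < tdist G T d s v"

locale rnd =
  fixes G :: "'a graph" and T :: "'a set" and d :: "'a \<Rightarrow> real"
  assumes sg: "simple_graph G" and TG: "T \<subseteq> fst G"
    and R1: "\<forall>u\<in>T. \<forall>v\<in>T. \<not> adj G u v"
    and feas: "lp_feasible G T d"
begin

lemma finG: "finite (fst G)" using sg by (simp add: simple_graph_def)

lemma dnn: "v \<in> fst G - T \<Longrightarrow> 0 \<le> d v" using feas by (simp add: lp_feasible_def)

lemma feas_path: "P \<in> term_paths G T \<Longrightarrow> 1 \<le> pcost T d P"
  using feas by (simp add: lp_feasible_def pcost_def)

lemma fin_pths: "finite (pths G s v)"
proof (rule finite_subset[OF _ finite_subset_distinct[OF finG]])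
  show "pths G s v \<subseteq> {xs. set xs \<subseteq> fst G \<and> distinct xs}"
    by (auto simp: pths_def Defs.simple_path_def)
qed

lemma pcost_mono:
  assumes "set A \<subseteq> set B" "set B \<subseteq> fst G"
  shows "pcost T d A \<le> pcost T d B"
  unfolding pcost_def
proof (rule sum_mono2)
  show "finite (set B - T)" by simp
  show "set A - T \<subseteq> set B - T" using assms by auto
  show "\<And>b. b \<in> set B - T - (set A - T) \<Longrightarrow> 0 \<le> d b" using assms dnn by auto
qed

lemma pcost_nonneg: "set B \<subseteq> fst G \<Longrightarrow> 0 \<le> pcost T d B"
  using pcost_mono[of "[]" B] by (simp add: pcost_def)

lemma dist_le:
  assumes "walk G W" "hd W = s" "last W = v"
  shows "tdist G T d s v \<le> pcost T d W"
proof -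
  obtain P where P: "Defs.simple_path G P" "hd P = s" "last P = v" "set P \<subseteq> set W"
    using walk_to_path[OF assms(1)] assms by auto
  then have Pin: "P \<in> pths G s v" by (simp add: pths_def)
  then have "tdist G T d s v = Min (pcost T d ` pths G s v)" by (auto simp: tdist_def)
  also have "\<dots> \<le> pcost T d P" using Pin fin_pths by simp
  also have "\<dots> \<le> pcost T d W" using pcost_mono[OF P(4) walk_set[OF assms(1)]] .
  finally show ?thesis .
qed

lemma dist_attained:
  assumes "walk G W" "hd W = s" "last W = v"
  shows "\<exists>P. Defs.simple_path G P \<and> hd P = s \<and> last P = v \<and> pcost T d P = tdist G T d s v"
proof -
  obtain P where P: "Defs.simple_path G P" "hd P = s" "last P = v"
    using walk_to_path[OF assms(1)] assms by auto
  then have ne: "pths G s v \<noteq> {}" by (auto simp: pths_def)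
  then have "tdist G T d s v = Min (pcost T d ` pths G s v)" by (simp add: tdist_def)
  moreover have "Min (pcost T d ` pths G s v) \<in> pcost T d ` pths G s v"
    using ne fin_pths by simp
  ultimately show ?thesis by (auto simp: pths_def)
qed

lemma dist_nonneg:
  assumes "v \<in> fst G - T"
  shows "0 \<le> tdist G T d s v"
proof (cases "pths G s v = {}")
  case True then show ?thesis using dnn[OF assms] by (simp add: tdist_def)
next
  case False
  then obtain P where P: "Defs.simple_path G P" "hd P = s" "last P = v" by (auto simp: pths_def)
  have "walk G P" using P(1) by (simp add: simple_path_iff)
  then obtain Q where "Defs.simple_path G Q" "hd Q = s" "last Q = v" "pcost T d Q = tdist G T d s v"
    using dist_attained P by blast
  moreover have "0 \<le> pcost T d Q" using \<open>Defs.simple_path G Q\<close> by (intro pcost_nonneg) (simp add: Defs.simple_path_def)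
  ultimately show ?thesis by simp
qed

lemma pair:
  assumes s: "s \<in> T" and t: "t \<in> T" and st: "s \<noteq> t" and v: "v \<in> fst G - T"
  shows "1 \<le> tdist G T d s v + tdist G T d t v - d v"
proof (cases "pths G s v = {} \<or> pths G t v = {}")
  case True
  then show ?thesis
  proof
    assume "pths G s v = {}"
    then show ?thesis using dist_nonneg[OF v, of t] by (simp add: tdist_def)
  next
    assume "pths G t v = {}"
    then show ?thesis using dist_nonneg[OF v, of s] by (simp add: tdist_def)
  qed
next
  case False
  then obtain P1 P2 where P1: "Defs.simple_path G P1" "hd P1 = s" "last P1 = v"
    and P2: "Defs.simple_path G P2" "hd P2 = t" "last P2 = v" by (auto simp: pths_def)
  obtain Q1 where Q1: "Defs.simple_path G Q1" "hd Q1 = s" "last Q1 = v" "pcost T d Q1 = tdist G T d s v"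
    using dist_attained[of P1 s v] P1 by (auto simp: simple_path_iff)
  obtain Q2 where Q2: "Defs.simple_path G Q2" "hd Q2 = t" "last Q2 = v" "pcost T d Q2 = tdist G T d t v"
    using dist_attained[of P2 t v] P2 by (auto simp: simple_path_iff)
  have w1: "walk G Q1" and w2: "walk G Q2" using Q1 Q2 by (auto simp: simple_path_iff)
  have ne1: "Q1 \<noteq> []" and ne2: "Q2 \<noteq> []" using w1 w2 walk_nonempty by auto
  have W: "walk G (Q1 @ rev Q2)"
    by (rule walk_append) (use w1 walk_rev[OF w2] Q1 Q2 ne2 in \<open>auto simp: hd_rev\<close>)
  have "hd (Q1 @ rev Q2) = s" using Q1 ne1 by simp
  moreover have "last (Q1 @ rev Q2) = t" using Q2 ne2 by (simp add: last_rev)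
  ultimately obtain P where P: "P \<in> term_paths G T" "set P \<subseteq> set (Q1 @ rev Q2)"
    using walk_term_path[OF W, of T] s t st by auto
  have "1 \<le> pcost T d P" using feas_path[OF P(1)] .
  also have "\<dots> \<le> sum d ((set Q1 - T) \<union> (set Q2 - T))"
    unfolding pcost_def
    by (rule sum_mono2) (use P(2) walk_set[OF W] dnn in auto)
  also have "\<dots> = pcost T d Q1 + pcost T d Q2 - sum d ((set Q1 - T) \<inter> (set Q2 - T))"
    using sum.union_inter[of "set Q1 - T" "set Q2 - T" d] unfolding pcost_def by simp
  also have "\<dots> \<le> pcost T d Q1 + pcost T d Q2 - d v"
  proof -
    have "v \<in> set Q1" "v \<in> set Q2" using Q1(3) Q2(3) ne1 ne2 last_in_set by metis+
    then have vin: "v \<in> (set Q1 - T) \<inter> (set Q2 - T)" using v by auto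
    have "d v \<le> sum d ((set Q1 - T) \<inter> (set Q2 - T))"
      by (rule member_le_sum[OF vin]) (use walk_set[OF w1] dnn in auto)
    then show ?thesis by simp
  qed
  finally show ?thesis using Q1(4) Q2(4) by simp
qed

end


context rnd begin

definition interior_nt :: "'a list \<Rightarrow> bool" where
  "interior_nt Q \<longleftrightarrow> (\<forall>i. 0 < i \<longrightarrow> i < length Q - 1 \<longrightarrow> Q ! i \<notin> T)"

lemma tp_len3:
  assumes "Q \<in> term_paths G T"
  shows "3 \<le> length Q"
proof -
  have Q: "walk G Q" "distinct Q" "hd Q \<in> T" "last Q \<in> T" "hd Q \<noteq> last Q"
    using assms by (auto simp: term_paths_walk)
  have ne: "Q \<noteq> []" using Q(1) walk_nonempty by auto
  have "length Q \<noteq> 1" using Q(5) ne by (cases Q) auto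
  moreover have "length Q \<noteq> 2"
  proof
    assume l: "length Q = 2"
    have "Q ! 0 = Q ! Suc 0 \<or> adj G (Q ! 0) (Q ! Suc 0)" using Q(1) l by (simp add: walk_nth_iff)
    moreover have "Q ! 0 \<noteq> Q ! Suc 0" using Q(2) l by (simp add: nth_eq_iff_index_eq)
    moreover have "Q ! 0 = hd Q" using ne by (simp add: hd_conv_nth)
    moreover have "Q ! Suc 0 = last Q" using ne l by (simp add: last_conv_nth)
    ultimately show False using R1 Q(3,4) by auto
  qed
  moreover have "length Q \<noteq> 0" using ne by simp
  ultimately show ?thesis by linarith
qed

lemma side:
  assumes Q: "Q \<in> term_paths G T" and int: "interior_nt Q" and th: "0 \<le> \<theta>" "\<theta> < 1"
  shows "\<exists>i. 0 < i \<and> i < length Q - 1 \<and> inI G T d (hd Q) (Q ! i) \<theta>"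
proof (rule ccontr)
  assume nI: "\<not> ?thesis"
  define n where "n = length Q"
  have n3: "3 \<le> n" using tp_len3[OF Q] by (simp add: n_def)
  have Qw: "walk G Q" "distinct Q" "hd Q \<in> T" "last Q \<in> T" "hd Q \<noteq> last Q"
    using Q by (auto simp: term_paths_walk)
  have ne: "Q \<noteq> []" using Qw(1) walk_nonempty by auto
  have hd0: "Q ! 0 = hd Q" using ne by (simp add: hd_conv_nth)
  have adjQ: "\<And>i. Suc i < n \<Longrightarrow> adj G (Q ! i) (Q ! Suc i)"
  proof -
    fix i assume i: "Suc i < n"
    have "Q ! i = Q ! Suc i \<or> adj G (Q ! i) (Q ! Suc i)" using Qw(1) i by (simp add: walk_nth_iff n_def)
    moreover have "Q ! i \<noteq> Q ! Suc i" using Qw(2) i by (simp add: nth_eq_iff_index_eq n_def)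
    ultimately show "adj G (Q ! i) (Q ! Suc i)" by simp
  qed
  have inG: "\<And>i. i < n \<Longrightarrow> Q ! i \<in> fst G" using walk_set[OF Qw(1)] by (auto simp: n_def)
  have intT: "\<And>i. 0 < i \<Longrightarrow> i < n - 1 \<Longrightarrow> Q ! i \<in> fst G - T"
    using int inG by (auto simp: interior_nt_def n_def)
  have notI: "\<And>i. 0 < i \<Longrightarrow> i < n - 1 \<Longrightarrow> \<not> inI G T d (hd Q) (Q ! i) \<theta>"
    using nI by (auto simp: n_def)
  have claim: "\<And>j. Suc j < n - 1 \<Longrightarrow> tdist G T d (hd Q) (Q ! Suc j) \<le> \<theta>"
  proof -
    fix j show "Suc j < n - 1 \<Longrightarrow> tdist G T d (hd Q) (Q ! Suc j) \<le> \<theta>"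
    proof (induction j)
      case 0
      have a: "adj G (Q ! 0) (Q ! Suc 0)" using adjQ n3 by simp
      have "hd Q \<in> fst G" using inG[of 0] hd0 n3 by simp
      then have w: "walk G [hd Q, Q ! Suc 0]" using a hd0 inG n3 by simp
      have x1: "Q ! Suc 0 \<in> fst G - T" by (rule intT) (use n3 in auto)
      have "tdist G T d (hd Q) (Q ! Suc 0) \<le> pcost T d [hd Q, Q ! Suc 0]"
        using dist_le[OF w] by simp
      also have "\<dots> = d (Q ! Suc 0)" using x1 Qw(3) by (simp add: pcost_def insert_Diff_if)
      finally have "tdist G T d (hd Q) (Q ! Suc 0) - d (Q ! Suc 0) \<le> \<theta>" using th by simp
      moreover have "\<not> inI G T d (hd Q) (Q ! Suc 0) \<theta>" by (rule notI) (use n3 in auto)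
      ultimately show ?case by (auto simp: inI_def)
    next
      case (Suc j)
      have IH: "tdist G T d (hd Q) (Q ! Suc j) \<le> \<theta>" using Suc by simp
      have wt: "walk G (take (Suc (Suc j)) Q)" using walk_take[OF Qw(1)] by simp
      have "hd (take (Suc (Suc j)) Q) = hd Q" using ne by simp
      moreover have "last (take (Suc (Suc j)) Q) = Q ! Suc j"
      proof -
        have lt: "Suc (Suc j) \<le> length Q" using Suc.prems n_def by simp
        then have "take (Suc (Suc j)) Q \<noteq> []" using ne by simp
        then have "last (take (Suc (Suc j)) Q) = take (Suc (Suc j)) Q ! (length (take (Suc (Suc j)) Q) - 1)"
          by (rule last_conv_nth)
        also have "\<dots> = Q ! Suc j" using lt by simp
        finally show ?thesis .
      qed
      ultimately obtain P where P: "Defs.simple_path G P" "hd P = hd Q" "last P = Q ! Suc j"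
        "pcost T d P = tdist G T d (hd Q) (Q ! Suc j)"
        using dist_attained[OF wt] by blast
      have wP: "walk G P" using P(1) by (simp add: simple_path_iff)
      have Pne: "P \<noteq> []" using wP walk_nonempty by auto
      let ?x = "Q ! Suc (Suc j)"
      have xG: "?x \<in> fst G - T" by (rule intT) (use Suc.prems in auto)
      have wPx: "walk G (P @ [?x])"
        by (rule walk_append) (use wP xG adjQ[of "Suc j"] Suc.prems P(3) in auto)
      have "tdist G T d (hd Q) ?x \<le> pcost T d (P @ [?x])"
        using dist_le[OF wPx] P(2) Pne by simp
      also have "\<dots> \<le> pcost T d P + d ?x"
      proof -
        have "set (P @ [?x]) - T = insert ?x (set P - T)" using xG by auto
        then have "pcost T d (P @ [?x]) = sum d (insert ?x (set P - T))" by (simp add: pcost_def)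
        also have "\<dots> \<le> sum d (set P - T) + d ?x"
          by (cases "?x \<in> set P - T") (use xG dnn in \<open>auto simp: insert_absorb\<close>)
        finally show ?thesis by (simp add: pcost_def)
      qed
      finally have "tdist G T d (hd Q) ?x - d ?x \<le> \<theta>" using IH P(4) by simp
      moreover have "\<not> inI G T d (hd Q) ?x \<theta>" by (rule notI) (use Suc.prems in auto)
      ultimately show ?case by (auto simp: inI_def)
    qed
  qed
  define v where "v = Q ! (n - 2)"
  have vT: "v \<in> fst G - T" unfolding v_def by (rule intT) (use n3 in auto)
  have e1: "Suc (n - 3) = n - 2" using n3 by arith
  have e2: "Suc (n - 3) < n - 1" using n3 by arith
  have c1: "tdist G T d (hd Q) v \<le> \<theta>" using claim[OF e2] unfolding e1 v_def .
  have lastQ: "Q ! (n - 1) = last Q" using ne by (simp add: last_conv_nth n_def)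
  have e3: "Suc (n - 2) = n - 1" using n3 by arith
  have e4: "Suc (n - 2) < n" using n3 by arith
  have a: "adj G v (last Q)" using adjQ[OF e4] unfolding e3 lastQ v_def .
  have w: "walk G [last Q, v]" using a vT walk_set[OF Qw(1)] ne by (auto simp: adj_sym)
  have "tdist G T d (last Q) v \<le> pcost T d [last Q, v]" using dist_le[OF w] by simp
  also have "\<dots> = d v" using vT Qw(4) by (simp add: pcost_def insert_Diff_if)
  finally have c2: "tdist G T d (last Q) v \<le> d v" .
  have "1 \<le> tdist G T d (hd Q) v + tdist G T d (last Q) v - d v" using pair Qw vT by blast
  then show False using c1 c2 th by linarith
qed

end


context rnd begin

lemma reduce:
  assumes P: "P \<in> term_paths G T"
  shows "\<exists>Q\<in>term_paths G T. set Q \<subseteq> set P \<and> interior_nt Q"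
proof -
  have Pw: "walk G P" "distinct P" "hd P \<in> T" "last P \<in> T" "hd P \<noteq> last P"
    using P by (auto simp: term_paths_walk)
  have ne: "P \<noteq> []" using Pw(1) walk_nonempty by auto
  have n3: "3 \<le> length P" using tp_len3[OF P] .
  define J where "J = {j. 0 < j \<and> j < length P \<and> P ! j \<in> T}"
  have "length P - 1 \<in> J" using n3 Pw(4) ne by (auto simp: J_def last_conv_nth)
  then have Jne: "J \<noteq> {}" by auto
  have finJ: "finite J" unfolding J_def by (rule finite_subset[of _ "{..<length P}"]) auto
  define j where "j = Min J"
  have jJ: "j \<in> J" using Jne finJ by (simp add: j_def)
  have jmin: "\<And>i. i \<in> J \<Longrightarrow> j \<le> i" using finJ by (simp add: j_def)
  have j: "0 < j" "j < length P" "P ! j \<in> T" using jJ by (auto simp: J_def)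
  define Q where "Q = take (Suc j) P"
  have lQ: "length Q = Suc j" using j by (simp add: Q_def)
  have Qw: "walk G Q" using walk_take[OF Pw(1)] by (simp add: Q_def)
  have Qd: "distinct Q" using Pw(2) by (simp add: Q_def)
  have Qne: "Q \<noteq> []" using lQ by auto
  have hQ: "hd Q = hd P" using ne by (simp add: Q_def)
  have lastQ: "last Q = P ! j"
  proof -
    have "last Q = Q ! (length Q - 1)" using Qne by (rule last_conv_nth)
    also have "\<dots> = P ! j" using lQ j by (simp add: Q_def)
    finally show ?thesis .
  qed
  have "hd P = P ! 0" using ne by (simp add: hd_conv_nth)
  moreover have "P ! 0 \<noteq> P ! j" using Pw(2) j ne nth_eq_iff_index_eq[of P 0 j] by auto
  ultimately have hl: "hd Q \<noteq> last Q" using hQ lastQ by simp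
  have "Q \<in> term_paths G T" using Qw Qd hQ lastQ hl Pw(3) j(3) by (simp add: term_paths_walk)
  moreover have "set Q \<subseteq> set P" by (simp add: Q_def set_take_subset)
  moreover have "interior_nt Q"
    unfolding interior_nt_def
  proof (intro allI impI)
    fix i assume i: "0 < i" "i < length Q - 1"
    then have "i < j" using lQ by simp
    then have "i \<notin> J" using jmin by force
    then show "Q ! i \<notin> T" using i \<open>i < j\<close> j by (simp add: J_def Q_def)
  qed
  ultimately show ?thesis by blast
qed

lemma rev_tp:
  assumes "Q \<in> term_paths G T" "interior_nt Q"
  shows "rev Q \<in> term_paths G T \<and> interior_nt (rev Q)"
proof
  have "walk G Q" using assms(1) by (simp add: term_paths_walk)
  then have "walk G (rev Q)" by (rule walk_rev)
  then show "rev Q \<in> term_paths G T" using assms(1)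
    by (auto simp: term_paths_walk hd_rev last_rev)
  show "interior_nt (rev Q)"
    unfolding interior_nt_def
  proof (intro allI impI)
    fix i assume i: "0 < i" "i < length (rev Q) - 1"
    have "rev Q ! i = Q ! (length Q - Suc i)" using i by (simp add: rev_nth)
    moreover have "0 < length Q - Suc i" "length Q - Suc i < length Q - 1" using i by auto
    ultimately show "rev Q ! i \<notin> T" using assms(2) by (simp add: interior_nt_def)
  qed
qed

definition xr :: "real \<Rightarrow> 'a \<Rightarrow> real" where
  "xr \<theta> v = (if v \<in> fst G - T then
      (if \<exists>t\<in>T. inI G T d t v \<theta> then 1/2 else 0) +
      (if \<exists>s\<in>T. \<exists>t\<in>T. s \<noteq> t \<and> inI G T d s v \<theta> \<and> inI G T d t v \<theta> then 1/2 else 0) else 0)"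

lemma xr_nonneg: "0 \<le> xr \<theta> v"
  by (simp add: xr_def)

lemma interior_in:
  assumes "Q \<in> term_paths G T" "interior_nt Q" "0 < i" "i < length Q - 1"
  shows "Q ! i \<in> set Q - T"
  using assms by (auto simp: interior_nt_def)

lemma xr_feasible:
  assumes th: "0 \<le> \<theta>" "\<theta> < 1"
  shows "lp_feasible G T (xr \<theta>)"
  unfolding lp_feasible_def
proof (intro conjI ballI)
  fix v show "0 \<le> xr \<theta> v" by (rule xr_nonneg)
next
  fix P assume P: "P \<in> term_paths G T"
  obtain Q where Q: "Q \<in> term_paths G T" "set Q \<subseteq> set P" "interior_nt Q"
    using reduce[OF P] by blast
  have Qw: "walk G Q" "hd Q \<in> T" "last Q \<in> T" "hd Q \<noteq> last Q" using Q(1) by (auto simp: term_paths_walk)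
  have Pset: "set P \<subseteq> fst G" using P walk_set[of G P] by (simp add: term_paths_walk)
  obtain i1 where i1: "0 < i1" "i1 < length Q - 1" "inI G T d (hd Q) (Q ! i1) \<theta>"
    using side[OF Q(1) Q(3) th] by blast
  have RQ: "rev Q \<in> term_paths G T" "interior_nt (rev Q)" using rev_tp[OF Q(1) Q(3)] by auto
  obtain i2 where i2: "0 < i2" "i2 < length (rev Q) - 1" "inI G T d (hd (rev Q)) (rev Q ! i2) \<theta>"
    using side[OF RQ th] by blast
  define u1 where "u1 = Q ! i1"
  define u2 where "u2 = rev Q ! i2"
  have u1: "u1 \<in> set P - T" using interior_in[OF Q(1) Q(3) i1(1,2)] Q(2) by (auto simp: u1_def)
  have u2': "u2 \<in> set (rev Q) - T" using interior_in[OF RQ i2(1,2)] by (simp add: u2_def)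
  then have u2: "u2 \<in> set P - T" using Q(2) by auto
  have I1: "inI G T d (hd Q) u1 \<theta>" using i1 by (simp add: u1_def)
  have I2: "inI G T d (last Q) u2 \<theta>" using i2 by (simp add: u2_def hd_rev)
  have fin: "finite (set P - T)" by simp
  have x1: "1/2 \<le> xr \<theta> u1" using u1 Pset I1 Qw(2) by (auto simp: xr_def)
  have x2: "1/2 \<le> xr \<theta> u2" using u2 Pset I2 Qw(3) by (auto simp: xr_def)
  show "1 \<le> (\<Sum>v\<in>set P - T. xr \<theta> v)"
  proof (cases "u1 = u2")
    case True
    have "xr \<theta> u1 = 1" using True u1 Pset I1 I2 Qw(2-4) by (auto simp: xr_def)
    moreover have "xr \<theta> u1 \<le> (\<Sum>v\<in>set P - T. xr \<theta> v)"
      by (rule member_le_sum[OF u1]) (auto simp: xr_nonneg)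
    ultimately show ?thesis by simp
  next
    case False
    have "(\<Sum>v\<in>{u1, u2}. xr \<theta> v) \<le> (\<Sum>v\<in>set P - T. xr \<theta> v)"
      by (rule sum_mono2[OF fin]) (use u1 u2 xr_nonneg in auto)
    moreover have "(\<Sum>v\<in>{u1, u2}. xr \<theta> v) = xr \<theta> u1 + xr \<theta> u2" using False by simp
    ultimately show ?thesis using x1 x2 by simp
  qed
qed

end


lemma fm_sub: "(A::real set) \<in> sets lborel \<Longrightarrow> A \<subseteq> {0..<1/2} \<Longrightarrow> A \<in> fmeasurable lborel"
proof (rule fmeasurableI2)
  show "{0..1/2::real} \<in> fmeasurable lborel" by (metis cbox_interval fmeasurable_cbox)
qed auto

lemma integrable_ind: "(A::real set) \<in> sets lborel \<Longrightarrow> A \<subseteq> {0..<1/2} \<Longrightarrow> integrable lborel (indicator A :: real \<Rightarrow> real)"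
  using fm_sub[of A] by (intro integrable_real_indicator) (auto simp: fmeasurable_def)

context rnd begin

lemma finT: "finite T" using finite_subset[OF TG finG] .

lemma xr_vals: "xr \<theta> v = 0 \<or> xr \<theta> v = 1/2 \<or> xr \<theta> v = 1"
  by (simp add: xr_def)

lemma halfint_sum:
  fixes f :: "'a \<Rightarrow> real"
  assumes "finite S" "\<And>v. v \<in> S \<Longrightarrow> f v = 0 \<or> f v = 1/2 \<or> f v = 1"
  shows "\<exists>k::nat. k \<le> 2 * card S \<and> sum f S = real k / 2"
  using assms
proof (induction S rule: finite_induct)
  case empty then show ?case by simp
next
  case (insert x S)
  obtain k where k: "k \<le> 2 * card S" "sum f S = real k / 2" using insert by auto
  have "\<exists>j::nat. j \<le> 2 \<and> f x = real j / 2"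
  proof -
    have "f x = 0 \<or> f x = 1/2 \<or> f x = 1" using insert.prems[of x] by simp
    then show ?thesis
    proof (elim disjE)
      assume "f x = 0" then show ?thesis by (intro exI[of _ 0]) simp
    next
      assume "f x = 1/2" then show ?thesis by (intro exI[of _ 1]) simp
    next
      assume "f x = 1" then show ?thesis by (intro exI[of _ 2]) simp
    qed
  qed
  then obtain j :: nat where j: "j \<le> 2" "f x = real j / 2" by blast
  show ?case
    using insert k j by (intro exI[of _ "k + j"]) (auto simp: add_divide_distrib)
qed

lemma exists_good_theta:
  "\<exists>\<theta>. 0 \<le> \<theta> \<and> \<theta> < 1/2 \<and> sum (xr \<theta>) (fst G - T) \<le> sum d (fst G - T)"
proof -
  define N where "N = fst G - T"
  define J :: "real set" where "J = {0..<1/2}"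
  define B1 where "B1 v = {\<theta>. \<exists>t\<in>T. inI G T d t v \<theta>} \<inter> J" for v
  define B2 where "B2 v = {\<theta>. \<exists>s\<in>T. \<exists>t\<in>T. s \<noteq> t \<and> inI G T d s v \<theta> \<and> inI G T d t v \<theta>} \<inter> J" for v
  have finN: "finite N" using finG by (simp add: N_def)
  have B1eq: "B1 v = {\<theta>. \<exists>t\<in>T. (\<lambda>t. tdist G T d t v - d v) t \<le> \<theta> \<and> \<theta> < (\<lambda>t. tdist G T d t v - d v) t + d v} \<inter> {0..<1/2}" for v
    unfolding B1_def J_def inI_def by simp
  have B2eq: "B2 v = {\<theta>. \<exists>s\<in>T. \<exists>t\<in>T. s \<noteq> t \<and> (\<lambda>t. tdist G T d t v - d v) s \<le> \<theta> \<and> \<theta> < (\<lambda>t. tdist G T d t v - d v) s + d v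
       \<and> (\<lambda>t. tdist G T d t v - d v) t \<le> \<theta> \<and> \<theta> < (\<lambda>t. tdist G T d t v - d v) t + d v} \<inter> {0..<1/2}" for v
    unfolding B2_def J_def inI_def by simp
  have sB1: "B1 v \<in> sets lborel" for v
    unfolding B1eq by (intro sets.Int A1_sets finT) auto
  have sB2: "B2 v \<in> sets lborel" for v
    unfolding B2eq by (intro sets.Int A2_sets finT) auto
  have subB1: "B1 v \<subseteq> J" for v by (auto simp: B1_def)
  have subB2: "B2 v \<subseteq> J" for v by (auto simp: B2_def)
  have iB1: "integrable lborel (indicator (B1 v) :: real \<Rightarrow> real)" for v
    using integrable_ind[OF sB1 subB1[unfolded J_def]] .
  have iB2: "integrable lborel (indicator (B2 v) :: real \<Rightarrow> real)" for v
    using integrable_ind[OF sB2 subB2[unfolded J_def]] .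
  have mb: "measure lborel (B1 v) + measure lborel (B2 v) \<le> d v" if v: "v \<in> N" for v
  proof -
    have "measure lborel (B1 v) + measure lborel (B2 v) \<le> d v"
      unfolding B1eq B2eq
    proof (rule measure_bound[OF finT])
      show "0 \<le> d v" using dnn v by (simp add: N_def)
      show "\<forall>s\<in>T. \<forall>t\<in>T. s \<noteq> t \<longrightarrow> 1 \<le> tdist G T d s v - d v + (tdist G T d t v - d v) + d v"
        using pair v by (auto simp: N_def)
    qed
    then show ?thesis .
  qed
  define g :: "real \<Rightarrow> real" where "g \<theta> = (\<Sum>v\<in>N. 1/2 * indicator (B1 v) \<theta> + 1/2 * indicator (B2 v) \<theta>)" for \<theta> :: real
  have gx: "g \<theta> = sum (xr \<theta>) N" if "\<theta> \<in> J" for \<theta>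
    unfolding g_def
  proof (rule sum.cong[OF refl])
    fix v assume "v \<in> N"
    then show "1/2 * indicator (B1 v) \<theta> + 1/2 * indicator (B2 v) \<theta> = xr \<theta> v"
      using that by (simp add: xr_def B1_def B2_def N_def indicator_def)
  qed
  have gnn: "0 \<le> g \<theta>" for \<theta> unfolding g_def by (intro sum_nonneg) auto
  have ig: "integrable lborel g"
    unfolding g_def
  proof (rule Bochner_Integration.integrable_sum)
    fix v show "integrable lborel (\<lambda>\<theta>. 1/2 * indicator (B1 v) \<theta> + 1/2 * indicator (B2 v) \<theta> :: real)"
      by (rule Bochner_Integration.integrable_add; rule Bochner_Integration.integrable_mult_right) (use iB1 iB2 in auto)
  qed
  have intg: "integral\<^sup>L lborel g = (\<Sum>v\<in>N. 1/2 * measure lborel (B1 v) + 1/2 * measure lborel (B2 v))"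
    unfolding g_def
    by (subst Bochner_Integration.integral_sum) (use iB1 iB2 in \<open>auto simp: Bochner_Integration.integral_add\<close>)
  have intg_le: "integral\<^sup>L lborel g \<le> 1/2 * sum d N"
  proof -
    have "integral\<^sup>L lborel g \<le> (\<Sum>v\<in>N. 1/2 * d v)"
      unfolding intg by (rule sum_mono) (use mb in \<open>auto simp: algebra_simps\<close>)
    then show ?thesis by (simp add: sum_distrib_left)
  qed
  define C where "C = (\<lambda>\<theta>. sum (xr \<theta>) N) ` J"
  have finC: "finite C"
  proof (rule finite_subset)
    show "C \<subseteq> (\<lambda>k. real k / 2) ` {..2 * card N}"
    proof
      fix c assume "c \<in> C"
      then obtain \<theta> where c: "c = sum (xr \<theta>) N" by (auto simp: C_def)
      obtain k where "k \<le> 2 * card N" "sum (xr \<theta>) N = real k / 2"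
        using halfint_sum[OF finN, of "xr \<theta>"] xr_vals by blast
      then show "c \<in> (\<lambda>k. real k / 2) ` {..2 * card N}" using c by auto
    qed
  qed simp
  have Cne: "C \<noteq> {}" by (simp add: C_def J_def)
  obtain \<theta>0 where t0: "\<theta>0 \<in> J" "sum (xr \<theta>0) N = Min C"
    using Min_in[OF finC Cne] by (auto simp: C_def)
  have t0min: "sum (xr \<theta>0) N \<le> sum (xr \<theta>) N" if "\<theta> \<in> J" for \<theta>
    unfolding t0(2) using finC that by (auto simp: C_def)
  define c0 where "c0 = sum (xr \<theta>0) N"
  have iJ: "integrable lborel (indicator J :: real \<Rightarrow> real)"
    using integrable_ind[of J] by (simp add: J_def)
  have "integral\<^sup>L lborel (\<lambda>\<theta>. c0 * indicator J \<theta>) \<le> integral\<^sup>L lborel g"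
  proof (rule Bochner_Integration.integral_mono)
    show "integrable lborel (\<lambda>\<theta>. c0 * indicator J \<theta>)" using iJ by auto
    show "integrable lborel g" by (rule ig)
    fix \<theta> :: real
    show "c0 * indicator J \<theta> \<le> g \<theta>"
    proof (cases "\<theta> \<in> J")
      case True then show ?thesis using gx[OF True] t0min[OF True] by (simp add: c0_def)
    next
      case False then show ?thesis using gnn by simp
    qed
  qed
  moreover have "integral\<^sup>L lborel (\<lambda>\<theta>. c0 * indicator J \<theta>) = c0 * (1/2)"
  proof -
    have "integral\<^sup>L lborel (indicator J :: real \<Rightarrow> real) = measure lborel J"
      by simp
    also have "\<dots> = 1/2" unfolding J_def by (subst measure_lborel_Ico) simp_all
    finally show ?thesis by simp
  qed
  ultimately have "c0 * (1/2) \<le> 1/2 * sum d N" using intg_le by linarith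
  then have "c0 \<le> sum d N" by simp
  then show ?thesis using t0(1) by (intro exI[of _ \<theta>0]) (simp add: c0_def N_def J_def)
qed

end


definition HI :: "'a graph \<Rightarrow> 'a set \<Rightarrow> ('a \<Rightarrow> real) \<Rightarrow> bool" where
  "HI G T x \<longleftrightarrow> (\<forall>v. x v = 0 \<or> x v = 1/2 \<or> x v = 1) \<and> (\<forall>v. v \<notin> fst G - T \<longrightarrow> x v = 0) \<and> lp_feasible G T x"

lemma hsum:
  fixes f :: "'a \<Rightarrow> real"
  assumes "finite S" "\<And>v. v \<in> S \<Longrightarrow> f v = 0 \<or> f v = 1/2 \<or> f v = 1"
  shows "\<exists>k::nat. k \<le> 2 * card S \<and> sum f S = real k / 2"
  using assms
proof (induction S rule: finite_induct)
  case empty then show ?case by simp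
next
  case (insert x S)
  obtain k where k: "k \<le> 2 * card S" "sum f S = real k / 2" using insert by auto
  have "\<exists>j::nat. j \<le> 2 \<and> f x = real j / 2"
  proof -
    have "f x = 0 \<or> f x = 1/2 \<or> f x = 1" using insert.prems[of x] by simp
    then show ?thesis
    proof (elim disjE)
      assume "f x = 0" then show ?thesis by (intro exI[of _ 0]) simp
    next
      assume "f x = 1/2" then show ?thesis by (intro exI[of _ 1]) simp
    next
      assume "f x = 1" then show ?thesis by (intro exI[of _ 2]) simp
    qed
  qed
  then obtain j :: nat where j: "j \<le> 2" "f x = real j / 2" by blast
  show ?case
    using insert k j by (intro exI[of _ "k + j"]) (auto simp: add_divide_distrib)
qed

lemma tp_has_nt:
  assumes R1: "\<forall>u\<in>T. \<forall>v\<in>T. \<not> adj G u v" and P: "P \<in> term_paths G T"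
  shows "\<exists>u\<in>set P. u \<notin> T"
proof -
  have Pw: "walk G P" "distinct P" "hd P \<in> T" "last P \<in> T" "hd P \<noteq> last P"
    using P by (auto simp: term_paths_walk)
  have ne: "P \<noteq> []" using Pw(1) walk_nonempty by auto
  have l2: "Suc 0 < length P" using ne Pw(5) by (cases P) auto
  have "P ! 0 = P ! Suc 0 \<or> adj G (P ! 0) (P ! Suc 0)" using Pw(1) l2 by (simp add: walk_nth_iff)
  moreover have "P ! 0 \<noteq> P ! Suc 0" using Pw(2) l2 ne nth_eq_iff_index_eq[of P 0 "Suc 0"] by auto
  moreover have "P ! 0 = hd P" using ne by (simp add: hd_conv_nth)
  ultimately have "P ! Suc 0 \<notin> T" using R1 Pw(3) by auto
  moreover have "P ! Suc 0 \<in> set P" using l2 by simp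
  ultimately show ?thesis by blast
qed

lemma LP_char:
  assumes sg: "simple_graph G" and TG: "T \<subseteq> fst G" and R1: "\<forall>u\<in>T. \<forall>v\<in>T. \<not> adj G u v"
  shows "\<exists>x. HI G T x \<and> LP G T = ereal (sum x (fst G - T)) \<and>
           (\<forall>d. lp_feasible G T d \<longrightarrow> sum x (fst G - T) \<le> sum d (fst G - T)) \<and>
           (\<exists>k::nat. sum x (fst G - T) = real k / 2)"
proof -
  define N where "N = fst G - T"
  have finN: "finite N" using sg by (simp add: simple_graph_def N_def)
  define C where "C = (\<lambda>x. sum x N) ` {x. HI G T x}"
  have hs: "\<exists>k::nat. k \<le> 2 * card N \<and> sum x N = real k / 2" if "HI G T x" for x
    by (rule hsum[OF finN]) (use that in \<open>auto simp: HI_def\<close>)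
  have finC: "finite C"
  proof (rule finite_subset)
    show "C \<subseteq> (\<lambda>k. real k / 2) ` {..2 * card N}"
    proof
      fix c assume "c \<in> C"
      then obtain x where "HI G T x" "c = sum x N" by (auto simp: C_def)
      then show "c \<in> (\<lambda>k. real k / 2) ` {..2 * card N}" using hs by fastforce
    qed
  qed simp
  define one where "one v = (if v \<in> N then 1 else 0 :: real)" for v
  have "lp_feasible G T one"
    unfolding lp_feasible_def
  proof (intro conjI ballI)
    fix v show "0 \<le> one v" by (simp add: one_def)
  next
    fix P assume P: "P \<in> term_paths G T"
    obtain u where u: "u \<in> set P" "u \<notin> T" using tp_has_nt[OF R1 P] by blast
    have "set P \<subseteq> fst G" using P walk_set[of G P] by (simp add: term_paths_walk)
    then have uN: "u \<in> N" using u by (auto simp: N_def)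
    have "one u \<le> (\<Sum>v\<in>set P - T. one v)"
      by (rule member_le_sum) (use u in \<open>auto simp: one_def\<close>)
    then show "1 \<le> (\<Sum>v\<in>set P - T. one v)" using uN by (simp add: one_def)
  qed
  then have "HI G T one" by (auto simp: HI_def one_def N_def)
  then have Cne: "C \<noteq> {}" by (auto simp: C_def)
  obtain x where x: "HI G T x" "sum x N = Min C"
    using Min_in[OF finC Cne] by (auto simp: C_def)
  have xmin: "sum x N \<le> sum y N" if "HI G T y" for y
    unfolding x(2) using finC that by (auto simp: C_def)
  have xle: "sum x N \<le> sum d N" if d: "lp_feasible G T d" for d
  proof -
    interpret rnd G T d using sg TG R1 d by unfold_locales
    obtain \<theta> where th: "0 \<le> \<theta>" "\<theta> < 1/2" "sum (xr \<theta>) N \<le> sum d N"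
      using exists_good_theta by (auto simp: N_def)
    have "HI G T (xr \<theta>)" unfolding HI_def
      using xr_vals xr_feasible[of \<theta>] th by (auto simp: xr_def)
    then show ?thesis using xmin th by fastforce
  qed
  have "LP G T = ereal (sum x N)"
  proof (rule antisym)
    show "LP G T \<le> ereal (sum x N)" unfolding LP_def N_def
      by (rule INF_lower2[of x]) (use x(1) in \<open>auto simp: HI_def N_def\<close>)
    show "ereal (sum x N) \<le> LP G T" unfolding LP_def
      by (rule INF_greatest) (use xle in \<open>auto simp: N_def\<close>)
  qed
  moreover obtain k where "sum x N = real k / 2" using hs[OF x(1)] by blast
  ultimately show ?thesis using x(1) xle by (auto simp: N_def)
qed


lemma del_ok:
  assumes sg: "simple_graph G" and TG: "T \<subseteq> fst G" and w: "w \<notin> T" and R1: "\<forall>u\<in>T. \<forall>v\<in>T. \<not> adj G u v"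
  shows "simple_graph (del_vertex G w)" "T \<subseteq> fst (del_vertex G w)" "\<forall>u\<in>T. \<forall>v\<in>T. \<not> adj (del_vertex G w) u v"
  using sg TG w R1 by (auto simp: simple_graph_def del_vertex_def adj_del[unfolded del_vertex_def])

lemma contract_ok:
  assumes sg: "simple_graph G" and TG: "T \<subseteq> fst G" and t: "t \<in> T" and w: "w \<in> fst G" "w \<notin> T"
    and R1: "\<forall>u\<in>T. \<forall>v\<in>T. \<not> adj G u v" and atw: "adj G t w"
    and R2: "\<forall>v\<in>fst G - T. \<forall>u\<in>T. \<forall>u'\<in>T. adj G v u \<and> adj G v u' \<longrightarrow> u = u'"
  shows "simple_graph (contract G t w)" "T \<subseteq> fst (contract G t w)" "\<forall>u\<in>T. \<forall>v\<in>T. \<not> adj (contract G t w) u v"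
proof -
  have tG: "t \<in> fst G" using t TG by auto
  have tw: "t \<noteq> w" using t w by auto
  show "simple_graph (contract G t w)"
    unfolding simple_graph_def
  proof (rule conjI)
    show "finite (fst (contract G t w))" using sg by (simp add: simple_graph_def contract_def)
  next
    show "\<forall>e\<in>snd (contract G t w). card e = 2 \<and> e \<subseteq> fst (contract G t w)"
    proof
    fix e assume "e \<in> snd (contract G t w)"
    then consider "e \<in> snd G" "t \<notin> e" "w \<notin> e" | x where "e = {t, x}" "x \<in> fst G" "x \<noteq> t" "x \<noteq> w"
      by (auto simp: contract_def)
    then show "card e = 2 \<and> e \<subseteq> fst (contract G t w)"
    proof cases
      case 1 then show ?thesis using sg by (auto simp: simple_graph_def contract_def)
    next
      case 2 then show ?thesis using tG tw by (auto simp: contract_def)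
    qed
    qed
  qed
  show "T \<subseteq> fst (contract G t w)" using TG w by (auto simp: contract_def)
  show "\<forall>u\<in>T. \<forall>v\<in>T. \<not> adj (contract G t w) u v"
  proof (intro ballI notI)
    fix u v assume uv: "u \<in> T" "v \<in> T" "adj (contract G t w) u v"
    then consider "adj G u v" | x where "{u, v} = {t, x}" "x \<in> fst G" "x \<noteq> t" "x \<noteq> w" "adj G t x \<or> adj G w x"
      unfolding adj_contract by blast
    then show False
    proof cases
      case 1 then show False using R1 uv by blast
    next
      case 2
      have xT: "x \<in> T" using 2(1) uv by (auto simp: doubleton_eq_iff)
      show False using 2(5)
      proof
        assume "adj G t x" then show False using R1 t xT by blast
      next
        assume "adj G w x"
        moreover have "adj G w t" using atw adj_sym by metis
        ultimately have "t = x" using R2 w t xT by blast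
        then show False using 2(3) by simp
      qed
    qed
  qed
qed


lemma h_feasible:
  assumes R1: "\<forall>u\<in>T. \<forall>v\<in>T. \<not> adj G u v"
    and R2: "\<forall>v\<in>fst G - T. \<forall>u\<in>T. \<forall>u'\<in>T. adj G v u \<and> adj G v u' \<longrightarrow> u = u'"
  defines "NT \<equiv> {v \<in> fst G - T. \<exists>s\<in>T. adj G v s}"
  shows "lp_feasible G T (\<lambda>v. if v \<in> NT then 1/2 else 0)"
  unfolding lp_feasible_def
proof (intro conjI ballI)
  fix v show "0 \<le> (if v \<in> NT then 1/2 else 0 :: real)" by simp
next
  fix P assume P: "P \<in> term_paths G T"
  let ?h = "\<lambda>v. if v \<in> NT then 1/2 else 0 :: real"
  have Pw: "walk G P" "distinct P" "hd P \<in> T" "last P \<in> T" "hd P \<noteq> last P"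
    using P by (auto simp: term_paths_walk)
  have ne: "P \<noteq> []" using Pw(1) walk_nonempty by auto
  define n where "n = length P"
  have n2: "2 \<le> n" using ne Pw(5) unfolding n_def by (cases P) (auto split: if_splits simp: Suc_le_eq)
  have PG: "set P \<subseteq> fst G" using walk_set[OF Pw(1)] .
  have adjP: "adj G (P ! i) (P ! Suc i)" if "Suc i < n" for i
  proof -
    have "P ! i = P ! Suc i \<or> adj G (P ! i) (P ! Suc i)" using Pw(1) that by (simp add: walk_nth_iff n_def)
    moreover have "P ! i \<noteq> P ! Suc i" using Pw(2) that nth_eq_iff_index_eq[of P i "Suc i"] by (auto simp: n_def)
    ultimately show ?thesis by simp
  qed
  have h0: "P ! 0 = hd P" using ne by (simp add: hd_conv_nth)
  have hl: "P ! (n - 1) = last P" using ne by (simp add: last_conv_nth n_def)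
  define u1 where "u1 = P ! 1"
  define u2 where "u2 = P ! (n - 2)"
  have a1: "adj G u1 (hd P)" using adjP[of 0] n2 h0 adj_sym unfolding u1_def by (metis One_nat_def Suc_1 Suc_le_lessD)
  have e: "Suc (n - 2) = n - 1" "Suc (n - 2) < n" using n2 by arith+
  have a2: "adj G u2 (last P)" using adjP[OF e(2)] unfolding e(1) hl u2_def .
  have u1P: "u1 \<in> set P" using n2 by (simp add: u1_def n_def)
  have u2P: "u2 \<in> set P" using n2 by (simp add: u2_def n_def)
  have u1T: "u1 \<notin> T" using a1 R1 Pw(3) by blast
  have u2T: "u2 \<notin> T" using a2 R1 Pw(4) by blast
  have u1N: "u1 \<in> NT" using u1P u1T a1 PG Pw(3) by (auto simp: NT_def)
  have u2N: "u2 \<in> NT" using u2P u2T a2 PG Pw(4) by (auto simp: NT_def)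
  have neq: "u1 \<noteq> u2"
  proof
    assume "u1 = u2"
    then have "hd P = last P" using R2 a1 a2 u1T u1P PG Pw(3,4) by blast
    then show False using Pw(5) by simp
  qed
  have "(\<Sum>v\<in>{u1, u2}. ?h v) \<le> (\<Sum>v\<in>set P - T. ?h v)"
    by (rule sum_mono2) (use u1P u2P u1T u2T in auto)
  moreover have "(\<Sum>v\<in>{u1, u2}. ?h v) = 1" using neq u1N u2N by simp
  ultimately show "1 \<le> (\<Sum>v\<in>set P - T. ?h v)" by simp
qed

theorem mainTheorem4:
  fixes G :: "'a graph" and T :: "'a set" and k :: int and t w :: 'a
  assumes inst: "is_mwc_instance G T"
    and R1: "\<forall>u\<in>T. \<forall>v\<in>T. \<not> adj G u v" "gap G T k \<ge> 0"
    and R2: "\<forall>v\<in>fst G - T. \<forall>u\<in>T. \<forall>u'\<in>T. adj G v u \<and> adj G v u' \<longrightarrow> u = u'"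
    and R3: "\<forall>s\<in>T. \<forall>x\<in>fst G - T. adj G s x \<longrightarrow> LP_zero G T x > LP G T"
    and t: "t \<in> T" and w: "w \<in> fst G - T" and tw: "adj G t w"
  shows "LP (del_vertex G w) T \<ge> LP G T - ereal (1/2) \<and>
         LP (contract G t w) T \<ge> LP G T + ereal (1/2) \<and>
         gap (del_vertex G w) T (k - 1) \<le> gap G T k - ereal (1/2) \<and>
         gap (contract G t w) T k \<le> gap G T k - ereal (1/2) \<and>
         (yes_instance G T k \<longleftrightarrow>
           (yes_instance (del_vertex G w) T (k - 1) \<or> yes_instance (contract G t w) T k))"
proof -
  have sg: "simple_graph G" and TG: "T \<subseteq> fst G" using inst by (auto simp: is_mwc_instance_def)
  have wG: "w \<in> fst G" and wT: "w \<notin> T" using w by auto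
  have tG: "t \<in> fst G" using t TG by auto
  define N where "N = fst G - T"
  have finN: "finite N" using sg by (simp add: simple_graph_def N_def)
  have wN: "w \<in> N" using w by (simp add: N_def)
  note D = del_ok[OF sg TG wT R1(1)]
  note C = contract_ok[OF sg TG t wG wT R1(1) tw R2]
  have fD: "fst (del_vertex G w) - T = N - {w}" by (auto simp: fst_del N_def)
  have fC: "fst (contract G t w) - T = N - {w}" by (auto simp: fst_contract N_def)
  obtain x0 where x0: "HI G T x0" "LP G T = ereal (sum x0 N)"
    "\<forall>d. lp_feasible G T d \<longrightarrow> sum x0 N \<le> sum d N" "\<exists>k::nat. sum x0 N = real k / 2"
    using LP_char[OF sg TG R1(1)] unfolding N_def by blast
  obtain x1 where x1: "HI (del_vertex G w) T x1" "LP (del_vertex G w) T = ereal (sum x1 (N - {w}))"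
    "\<exists>k::nat. sum x1 (N - {w}) = real k / 2"
    using LP_char[OF D] unfolding fD by blast
  obtain x2 where x2: "HI (contract G t w) T x2" "LP (contract G t w) T = ereal (sum x2 (N - {w}))"
    "\<exists>k::nat. sum x2 (N - {w}) = real k / 2"
    using LP_char[OF C] unfolding fC by blast
  define c0 where "c0 = sum x0 N"
  define c1 where "c1 = sum x1 (N - {w})"
  define c2 where "c2 = sum x2 (N - {w})"
  obtain k0 :: nat where k0: "c0 = real k0 / 2" using x0(4) c0_def by blast
  obtain k1 :: nat where k1: "c1 = real k1 / 2" using x1(3) c1_def by blast
  obtain k2 :: nat where k2: "c2 = real k2 / 2" using x2(3) c2_def by blast
  have x1nn: "0 \<le> x1 v" for v
  proof -
    have "x1 v = 0 \<or> x1 v = 1/2 \<or> x1 v = 1" using x1(1) by (simp add: HI_def)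
    then show ?thesis by auto
  qed
  have x2nn: "0 \<le> x2 v" for v
  proof -
    have "x2 v = 0 \<or> x2 v = 1/2 \<or> x2 v = 1" using x2(1) by (simp add: HI_def)
    then show ?thesis by auto
  qed
  have B: "c0 + 1/2 \<le> c2"
  proof -
    define D2 where "D2 = x2(w := 0)"
    have D2nn: "0 \<le> D2 v" for v using x2nn by (simp add: D2_def)
    have feas2: "lp_feasible (contract G t w) T x2" using x2(1) by (simp add: HI_def)
    have "lp_feasible G T D2"
      unfolding lp_feasible_def
    proof (intro conjI ballI)
      fix v show "0 \<le> D2 v" by (rule D2nn)
    next
      fix P assume P: "P \<in> term_paths G T"
      obtain Q where Q: "Q \<in> term_paths (contract G t w) T" "set Q \<subseteq> (set P - {w}) \<union> {t}"
        using tp_to_contract[OF P tG t wT] t wT by auto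
      have "1 \<le> (\<Sum>v\<in>set Q - T. x2 v)" using feas2 Q(1) by (simp add: lp_feasible_def)
      also have "\<dots> = (\<Sum>v\<in>set Q - T. D2 v)"
        by (rule sum.cong) (use Q(2) t wT in \<open>auto simp: D2_def\<close>)
      also have "\<dots> \<le> (\<Sum>v\<in>set P - T. D2 v)"
        by (rule sum_mono2) (use Q(2) t D2nn in auto)
      finally show "1 \<le> (\<Sum>v\<in>set P - T. D2 v)" .
    qed
    moreover have "sum D2 N = c2"
    proof -
      have "sum D2 N = D2 w + sum D2 (N - {w})" using finN wN by (simp add: sum.remove)
      also have "sum D2 (N - {w}) = c2" unfolding c2_def by (rule sum.cong) (auto simp: D2_def)
      finally show ?thesis by (simp add: D2_def)
    qed
    ultimately have "LP_zero G T w \<le> ereal c2"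
      unfolding LP_zero_def N_def by (intro INF_lower2[of D2]) (auto simp: D2_def N_def)
    moreover have "LP_zero G T w > LP G T" using R3 t w tw by blast
    ultimately have "ereal c0 < ereal c2" using x0(2) unfolding c0_def by (metis order_less_le_trans)
    then have "c0 < c2" by simp
    then have "k0 < k2" using k0 k2 by simp
    then have "real k0 + 1 \<le> real k2" by simp
    then show ?thesis using k0 k2 by simp
  qed
  have A: "c0 - 1/2 \<le> c1"
  proof (rule ccontr)
    assume "\<not> ?thesis"
    then have "c1 < c0 - 1/2" by simp
    then have "real k1 + 1 < real k0" using k0 k1 by simp
    then have "real (k1 + 1) < real k0" by simp
    then have "k1 + 1 < k0" by (simp only: of_nat_less_iff)
    then have "k1 + 2 \<le> k0" by simp
    then have "real (k1 + 2) \<le> real k0" by (simp only: of_nat_le_iff)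
    then have "real k1 + 2 \<le> real k0" by simp
    then have c10: "c1 + 1 \<le> c0" using k0 k1 by simp
    define D where "D = x1(w := 1)"
    have Dnn: "0 \<le> D v" for v using x1nn by (simp add: D_def)
    have feas1: "lp_feasible (del_vertex G w) T x1" using x1(1) by (simp add: HI_def)
    have feasD: "lp_feasible G T D"
      unfolding lp_feasible_def
    proof (intro conjI ballI)
      fix v show "0 \<le> D v" by (rule Dnn)
    next
      fix P assume P: "P \<in> term_paths G T"
      show "1 \<le> (\<Sum>v\<in>set P - T. D v)"
      proof (cases "w \<in> set P")
        case True
        have "D w \<le> (\<Sum>v\<in>set P - T. D v)"
          by (rule member_le_sum) (use True wT Dnn in auto)
        then show ?thesis by (simp add: D_def)
      next
        case False
        then have "P \<in> term_paths (del_vertex G w) T" using P by (simp add: term_paths_del)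
        then have "1 \<le> (\<Sum>v\<in>set P - T. x1 v)" using feas1 by (simp add: lp_feasible_def)
        also have "\<dots> = (\<Sum>v\<in>set P - T. D v)"
          by (rule sum.cong) (use False in \<open>auto simp: D_def\<close>)
        finally show ?thesis .
      qed
    qed
    have costD: "sum D N = c1 + 1"
    proof -
      have "sum D N = D w + sum D (N - {w})" using finN wN by (simp add: sum.remove)
      also have "sum D (N - {w}) = c1" unfolding c1_def by (rule sum.cong) (auto simp: D_def)
      finally show ?thesis by (simp add: D_def)
    qed
    define NT where "NT = {v \<in> fst G - T. \<exists>s\<in>T. adj G v s}"
    have NTN: "NT \<subseteq> N" by (auto simp: NT_def N_def)
    have finNT: "finite NT" using finite_subset[OF NTN finN] .
    have "adj G w t" using tw adj_sym by metis
    then have wNT: "w \<in> NT" using w t unfolding NT_def by blast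
    have hf: "lp_feasible G T (\<lambda>v. if v \<in> NT then 1/2 else 0)"
      using h_feasible[OF R1(1) R2] unfolding NT_def by simp
    have "c0 \<le> sum (\<lambda>v. if v \<in> NT then 1/2 else 0 :: real) N"
      unfolding c0_def using x0(3) hf by blast
    also have "\<dots> = sum (\<lambda>v. 1/2) NT"
    proof -
      have "sum (\<lambda>v. if v \<in> NT then 1/2 else 0 :: real) N = sum (\<lambda>v. 1/2) (N \<inter> NT)"
        using sum.inter_restrict[OF finN, of "\<lambda>v. 1/2 :: real" NT] by (simp add: indicator_def if_distrib cong: if_cong)
      also have "N \<inter> NT = NT" using NTN by auto
      finally show ?thesis .
    qed
    also have "\<dots> = real (card NT) / 2" by simp
    finally have c0h: "c0 \<le> real (card NT) / 2" .
    have "\<exists>u\<in>NT - {w}. x1 u < 1/2"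
    proof (rule ccontr)
      assume nex: "\<not> ?thesis"
      have ge: "1/2 \<le> x1 u" if "u \<in> NT - {w}" for u
      proof -
        have "\<not> x1 u < 1/2" using nex that by blast
        then show ?thesis by simp
      qed
      have "real (card (NT - {w})) * (1/2) \<le> sum x1 (NT - {w})"
        by (rule sum_bounded_below) (use ge in auto)
      also have "\<dots> \<le> c1" unfolding c1_def
        by (rule sum_mono2) (use finN NTN x1nn in auto)
      finally have "real (card (NT - {w})) * (1/2) \<le> c1" .
      moreover have cc: "card (NT - {w}) = card NT - 1" using finNT wNT by simp
      moreover have c1le: "card NT \<ge> 1" using finNT wNT by (metis One_nat_def Suc_leI card_gt_0_iff empty_iff)
      have "real (card (NT - {w})) = real (card NT) - 1" unfolding cc using c1le by (simp add: of_nat_diff)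
      ultimately have "(real (card NT) - 1) * (1/2) \<le> c1" by simp
      then show False using c10 c0h by argo
    qed
    then obtain u where u: "u \<in> NT" "u \<noteq> w" "x1 u < 1/2" by blast
    have "x1 u = 0 \<or> x1 u = 1/2 \<or> x1 u = 1" using x1(1) by (simp add: HI_def)
    then have "x1 u = 0" using u(3) by auto
    then have Du: "D u = 0" using u(2) by (simp add: D_def)
    have "LP_zero G T u \<le> ereal (sum D N)"
      unfolding LP_zero_def N_def using feasD Du by (intro INF_lower2[of D]) (auto simp: N_def)
    moreover obtain s where s: "s \<in> T" "adj G u s" "u \<in> fst G - T" using u(1) by (auto simp: NT_def)
    then have "adj G s u" using adj_sym by metis
    then have "LP_zero G T u > LP G T" using R3 s by blast
    ultimately have "ereal c0 < ereal (c1 + 1)" using x0(2) costD unfolding c0_def by (metis order_less_le_trans)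
    then have "c0 < c1 + 1" by simp
    then show False using c10 by simp
  qed
  have LP0: "LP G T = ereal c0" using x0(2) by (simp add: c0_def)
  have LP1: "LP (del_vertex G w) T = ereal c1" using x1(2) by (simp add: c1_def)
  have LP2: "LP (contract G t w) T = ereal c2" using x2(2) by (simp add: c2_def)
  have Y: "yes_instance G T k \<longleftrightarrow> (yes_instance (del_vertex G w) T (k - 1) \<or> yes_instance (contract G t w) T k)"
    by (rule yes_equiv[OF sg t tG wG wT tw])
  show ?thesis
    unfolding gap_def LP0 LP1 LP2 using A B Y by simp
qed


end
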